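(* There is a universal constant $c>0$ such that for every integer $k\ge 3$ and every $\varepsilon\in(0,1/10)$, \[ d(k,\varepsilon)\ \le\ \frac{\log(\lceil 1/\varepsilon\rceil+1)}{\log(\lceil 1/\varepsilon\rceil+1)-\log(1-1/k)}\ \le\ 1-\frac{c}{k\,|\log\varepsilon|}. \] Moreover, the first inequality holds with $d(k,\varepsilon)$ replaced by the Assouad dimension $\dim_A(E)$ of any bounded set $E\subset\mathbb{R}$ that $\varepsilon$-avoids $k$APs.
   Context: A $k$-term arithmetic progression ($k$AP) is a set $P=\{x, x+\lambda, \dots, x+(k-1)\lambda\}\subset\mathbb{R}$ with $\lambda>0$, called the gap length of $P$. Given $\varepsilon\in(0,1)$, a set $E\subset\mathbb{R}$ is said to $\varepsilon$-avoid $k$APs if for every $k$AP $P$ with gap length $\lambda$ one has $\sup_{p\in P}\inf_{x\in E}|x-p|\ \ge\ \varepsilon\lambda$. Define $d(k,\varepsilon)=\sup\{\dim_H(E): E\subset\mathbb{R} \text{ bounded and } E \ \varepsilon\text{-avoids } k\text{APs}\}$, where $\dim_H$ is Hausdorff dimension. For bounded $F$ and $r>0$ let $N_r(F)$ be the least number of open balls of radius at most $r$ covering $F$; the Assouad dimension of $E\subseteq\mathbb{R}$ is $\dim_A(E)=\inf\{\alpha\ge 0: \exists C>0 \text{ such that for all } 0<r<R,\ \sup_{x\in E}N_r(B(x,R)\cap E)\le C(R/r)^\alpha\}$. *)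

theory Defs
  imports "HOL-Analysis.Analysis" "HOL-Library.Extended_Real"
begin

text \<open>E epsilon-avoids kAPs: for every kAP P = {x, x+l, ..., x+(k-1)l} with l > 0,
  sup over p in P of inf over y in E of |y - p| is at least eps*l.
  (Written out: some point of P has distance at least eps*l from every point of E;
  with the convention inf over the empty set = +infinity.)\<close>
definition avoids_AP :: "nat \<Rightarrow> real \<Rightarrow> real set \<Rightarrow> bool" where
  "avoids_AP k eps E \<longleftrightarrow>
     (\<forall>x l. l > 0 \<longrightarrow> (\<exists>j<k. \<forall>y\<in>E. \<bar>y - (x + real j * l)\<bar> \<ge> eps * l))"

definition hausdorff_content :: "real \<Rightarrow> real \<Rightarrow> real set \<Rightarrow> ennreal" where
  "hausdorff_content s \<delta> E =
     (INF U\<in>{U :: nat \<Rightarrow> real set. E \<subseteq> (\<Union>i. U i) \<and> (\<forall>i. bounded (U i) \<and> diameter (U i) \<le> \<delta>)}.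
        (\<Sum>i. ennreal (diameter (U i) powr s)))"

definition hausdorff_measure :: "real \<Rightarrow> real set \<Rightarrow> ennreal" where
  "hausdorff_measure s E = (SUP \<delta>\<in>{0<..}. hausdorff_content s \<delta> E)"

definition hausdorff_dim :: "real set \<Rightarrow> ereal" where
  "hausdorff_dim E = Inf {ereal s | s. s \<ge> 0 \<and> hausdorff_measure s E = 0}"

definition d_AP :: "nat \<Rightarrow> real \<Rightarrow> ereal" where
  "d_AP k eps = (SUP E\<in>{E. bounded E \<and> avoids_AP k eps E}. hausdorff_dim E)"

definition covering_number :: "real \<Rightarrow> real set \<Rightarrow> nat" where
  "covering_number r F =
     (LEAST n. \<exists>c \<rho> :: nat \<Rightarrow> real. (\<forall>i<n. 0 < \<rho> i \<and> \<rho> i \<le> r) \<and> F \<subseteq> (\<Union>i<n. ball (c i) (\<rho> i)))"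

definition assouad_dim :: "real set \<Rightarrow> ereal" where
  "assouad_dim E = Inf {ereal \<alpha> | \<alpha>. \<alpha> \<ge> 0 \<and> (\<exists>C>0. \<forall>r R. 0 < r \<and> r < R \<longrightarrow>
        (\<forall>x\<in>E. real (covering_number r (ball x R \<inter> E)) \<le> C * (R / r) powr \<alpha>))}"

end

theory Submission
  imports Defs
begin

lemma tangent_powr:
  fixes x c \<alpha> :: real
  assumes "0 < \<alpha>" "\<alpha> < 1" "c > 0" "x \<ge> 0"
  shows "x powr \<alpha> \<le> (1-\<alpha>) * c powr \<alpha> + \<alpha> * c powr (\<alpha>-1) * x"
proof (cases "x = 0")
  case True then show ?thesis using assms by simp
next
  case False
  then have xp: "x > 0" using assms by simp
  have "x powr \<alpha> * c powr (1-\<alpha>) \<le> \<alpha>*x + (1-\<alpha>)*c"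
    using Youngs_inequality_0[of \<alpha> "1-\<alpha>" x c] assms xp by simp
  then have "x powr \<alpha> * c powr (1-\<alpha>) * c powr (\<alpha>-1) \<le> (\<alpha>*x + (1-\<alpha>)*c) * c powr (\<alpha>-1)"
    by (intro mult_right_mono) auto
  moreover have "c powr (1-\<alpha>) * c powr (\<alpha>-1) = 1"
    using assms by (simp flip: powr_add)
  moreover have "c * c powr (\<alpha>-1) = c powr \<alpha>"
    using assms by (simp add: powr_diff)
  ultimately show ?thesis by (simp add: algebra_simps)
qed

lemma concave_sum_powr:
  fixes l :: "'a \<Rightarrow> real"
  assumes "finite S" "card S \<le> N" "N \<ge> 1" "\<And>s. s\<in>S \<Longrightarrow> l s \<ge> 0"
    "(\<Sum>s\<in>S. l s) \<le> T" "T > 0" "0 < \<alpha>" "\<alpha> < 1"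
  shows "(\<Sum>s\<in>S. l s powr \<alpha>) \<le> real N powr (1-\<alpha>) * T powr \<alpha>"
proof -
  define c where "c = T / real N"
  have cp: "c > 0" using assms by (simp add: c_def)
  have "(\<Sum>s\<in>S. l s powr \<alpha>) \<le> (\<Sum>s\<in>S. (1-\<alpha>) * c powr \<alpha> + \<alpha> * c powr (\<alpha>-1) * l s)"
    by (intro sum_mono tangent_powr) (use assms cp in auto)
  also have "\<dots> = real (card S) * ((1-\<alpha>) * c powr \<alpha>) + \<alpha> * c powr (\<alpha>-1) * (\<Sum>s\<in>S. l s)"
    by (simp add: sum.distrib sum_distrib_left)
  also have "\<dots> \<le> real N * ((1-\<alpha>) * c powr \<alpha>) + \<alpha> * c powr (\<alpha>-1) * T"
    using assms cp by (intro add_mono mult_right_mono mult_left_mono) auto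
  also have "\<alpha> * c powr (\<alpha>-1) * T = \<alpha> * real N * (c * c powr (\<alpha>-1))"
    using assms by (simp add: c_def)
  also have "c * c powr (\<alpha>-1) = c powr \<alpha>"
    using cp by (simp add: powr_diff)
  also have "real N * ((1-\<alpha>) * c powr \<alpha>) + \<alpha> * real N * c powr \<alpha> = real N * c powr \<alpha>"
    by (simp add: algebra_simps)
  also have "real N * c powr \<alpha> = real N powr (1-\<alpha>) * T powr \<alpha>"
    using assms by (simp add: c_def powr_divide powr_diff)
  finally show ?thesis .
qed


lemma one_step:
  fixes k :: nat and eps a b :: real and E :: "real set"
  assumes k3: "k \<ge> 3" and e0: "0 < eps" and e1: "eps < 1/10" and av: "avoids_AP k eps E"
    and ab: "a \<le> b"
  shows "\<exists>(S::nat set) lo hi. finite S \<and> card S \<le> nat \<lceil>1/eps\<rceil> + 1 \<and> (\<forall>s\<in>S. lo s \<le> hi s)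
     \<and> E \<inter> {a..b} \<subseteq> (\<Union>s\<in>S. {lo s..hi s}) \<and> (\<Sum>s\<in>S. hi s - lo s) \<le> (1 - 1/real k) * (b - a)"
proof (cases "a = b")
  case True
  show ?thesis
    by (rule exI[of _ "{0}"], rule exI[of _ "\<lambda>_. a"], rule exI[of _ "\<lambda>_. a"]) (use True in auto)
next
  case False
  then have ab': "a < b" using ab by simp
  define m where "m = nat \<lceil>1/eps\<rceil>"
  have m1: "real m \<ge> 1/eps" unfolding m_def by linarith
  have mpos: "m \<ge> 1"
  proof -
    have "real m > 0" using m1 e0 by (smt (verit) divide_pos_pos)
    then show ?thesis by simp
  qed
  have em: "eps * real m \<ge> 1" using m1 e0 by (simp add: field_simps)
  define L where "L = b - a"
  define lam where "lam = L / real k"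
  define h where "h = lam / real m"
  have Lp: "L > 0" using ab' by (simp add: L_def)
  have kp: "real k > 0" using k3 by simp
  have lamp: "lam > 0" using Lp kp by (simp add: lam_def)
  have hp: "h > 0" using lamp mpos by (simp add: h_def)
  have lam_eq: "lam = real m * h" using mpos by (simp add: h_def)
  have L_eq: "L = real k * real m * h" using kp lam_eq by (simp add: lam_def field_simps)
  have cell: "\<exists>j<k. \<forall>y\<in>E. \<not> (a + real (j*m+i) * h \<le> y \<and> y \<le> a + real (j*m+i+1) * h)" if "i < m" for i
  proof -
    from av lamp obtain j where j: "j < k" and jy: "\<forall>y\<in>E. \<bar>y - ((a + (real i + 1/2) * h) + real j * lam)\<bar> \<ge> eps * lam"
      unfolding avoids_AP_def by blast
    have "\<not> (a + real (j*m+i) * h \<le> y \<and> y \<le> a + real (j*m+i+1) * h)" if y: "y \<in> E" for y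
    proof
      assume c: "a + real (j*m+i) * h \<le> y \<and> y \<le> a + real (j*m+i+1) * h"
      have ctr: "(a + (real i + 1/2) * h) + real j * lam = a + (real (j*m+i) + 1/2) * h"
        by (simp add: lam_eq algebra_simps)
      have "\<bar>y - ((a + (real i + 1/2) * h) + real j * lam)\<bar> \<le> h/2"
        using c unfolding ctr by (simp add: algebra_simps split: abs_split)
      moreover have "eps * lam \<ge> h"
        using em hp by (simp add: lam_eq)
      ultimately show False using jy y hp by fastforce
    qed
    then show ?thesis using j by blast
  qed
  then have "\<forall>i\<in>{..<m}. \<exists>j. j < k \<and> (\<forall>y\<in>E. \<not> (a + real (j*m+i) * h \<le> y \<and> y \<le> a + real (j*m+i+1) * h))"
    by blast
  then obtain g where g: "\<And>i. i < m \<Longrightarrow> g i < k \<and> (\<forall>y\<in>E. \<not> (a + real (g i*m+i) * h \<le> y \<and> y \<le> a + real (g i*m+i+1) * h))"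
    by (metis lessThan_iff)
  define F where "F = (\<lambda>i. g i * m + i) ` {..<m}"
  have injF: "inj_on (\<lambda>i. g i * m + i) {..<m}"
  proof
    fix x y assume "x \<in> {..<m}" "y \<in> {..<m}" "g x * m + x = g y * m + y"
    then have "(g x * m + x) mod m = (g y * m + y) mod m" by simp
    then show "x = y" using \<open>x \<in> {..<m}\<close> \<open>y \<in> {..<m}\<close> by simp
  qed
  have cardF: "card F = m" unfolding F_def using injF by (simp add: card_image)
  have finF: "finite F" unfolding F_def by simp
  have Fsub: "F \<subseteq> {..<k*m}"
  proof
    fix f assume "f \<in> F"
    then obtain i where i: "i < m" "f = g i * m + i" unfolding F_def by auto
    have "g i + 1 \<le> k" using g[OF i(1)] by simp
    then have "(g i + 1) * m \<le> k * m" by (rule mult_right_mono) simp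
    then show "f \<in> {..<k*m}" using i by (simp add: algebra_simps)
  qed
  have free: "\<And>f y. f \<in> F \<Longrightarrow> y \<in> E \<Longrightarrow> \<not> (a + real f * h \<le> y \<and> y \<le> a + real (f+1) * h)"
    unfolding F_def using g by auto
  define S where "S = insert 0 (Suc ` F)"
  define e where "e s = Min ({f\<in>F. s \<le> f} \<union> {k*m})" for s
  have finS: "finite S" using finF by (simp add: S_def)
  have cardS: "card S \<le> m + 1"
  proof -
    have "card S \<le> Suc (card (Suc ` F))" unfolding S_def by (rule card_insert_le_m1) auto
    also have "card (Suc ` F) \<le> m" using cardF card_image_le finF by metis
    finally show ?thesis by simp
  qed
  have Sle: "s \<le> k*m" if "s \<in> S" for s
    using that Fsub unfolding S_def by auto
  have efin: "finite ({f\<in>F. s \<le> f} \<union> {k*m})" for s using finF by simp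
  have e_le: "e s \<le> k*m" for s unfolding e_def by (rule Min_le) (use efin in auto)
  have e_le_f: "e s \<le> f" if "f \<in> F" "s \<le> f" for s f unfolding e_def by (rule Min_le) (use efin that in auto)
  have e_in: "e s \<in> {f\<in>F. s \<le> f} \<union> {k*m}" for s unfolding e_def by (rule Min_in) (use efin in auto)
  have e_ge: "s \<le> e s" if "s \<le> k*m" for s using e_in[of s] that by auto
  define lo where "lo s = a + real s * h" for s
  define hi where "hi s = a + real (e s) * h" for s
  have lohi: "\<forall>s\<in>S. lo s \<le> hi s" using e_ge Sle hp unfolding lo_def hi_def by auto
  have disj: "{s..<e s} \<inter> {s'..<e s'} = {}" if "s \<in> S" "s' \<in> S" "s < s'" for s s'
  proof -
    from that obtain f' where f': "f' \<in> F" "s' = Suc f'" unfolding S_def by auto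
    have "e s \<le> f'" using e_le_f[OF f'(1)] f' that by simp
    then show ?thesis using f' by auto
  qed
  have runs_sub: "(\<Union>s\<in>S. {s..<e s}) \<subseteq> {..<k*m} - F"
  proof
    fix x assume "x \<in> (\<Union>s\<in>S. {s..<e s})"
    then obtain s where s: "s \<in> S" "s \<le> x" "x < e s" by auto
    have "x < k*m" using e_le[of s] s by simp
    moreover have "x \<notin> F" using e_le_f[of x s] s by auto
    ultimately show "x \<in> {..<k*m} - F" by simp
  qed
  have sumnat: "(\<Sum>s\<in>S. e s - s) \<le> k*m - m"
  proof -
    have "(\<Sum>s\<in>S. e s - s) = (\<Sum>s\<in>S. card {s..<e s})" by simp
    also have "\<dots> = card (\<Union>s\<in>S. {s..<e s})"
    proof (rule card_UN_disjoint[symmetric])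
      show "finite S" by (rule finS)
      show "\<forall>i\<in>S. finite {i..<e i}" by simp
      show "\<forall>i\<in>S. \<forall>j\<in>S. i \<noteq> j \<longrightarrow> {i..<e i} \<inter> {j..<e j} = {}"
        using disj by (metis Int_commute linorder_neqE_nat)
    qed
    also have "\<dots> \<le> card ({..<k*m} - F)" by (rule card_mono) (use runs_sub in auto)
    also have "\<dots> = k*m - m" using Fsub cardF finF by (simp add: card_Diff_subset)
    finally show ?thesis .
  qed
  have "(\<Sum>s\<in>S. hi s - lo s) = (\<Sum>s\<in>S. real (e s - s) * h)"
    by (rule sum.cong) (use e_ge Sle in \<open>auto simp: hi_def lo_def of_nat_diff algebra_simps\<close>)
  also have "\<dots> = real (\<Sum>s\<in>S. e s - s) * h" by (simp add: sum_distrib_right)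
  also have "\<dots> \<le> real (k*m - m) * h" using sumnat hp by (intro mult_right_mono) (simp_all only: of_nat_le_iff)
  also have "real (k*m - m) = real k * real m - real m"
    using k3 by (simp add: of_nat_diff)
  also have "(real k * real m - real m) * h = (1 - 1/real k) * (b - a)"
    using kp L_eq by (simp add: L_def[symmetric] field_simps)
  finally have sumb: "(\<Sum>s\<in>S. hi s - lo s) \<le> (1 - 1/real k) * (b - a)" .
  have cov: "E \<inter> {a..b} \<subseteq> (\<Union>s\<in>S. {lo s..hi s})"
  proof
    fix y assume y: "y \<in> E \<inter> {a..b}"
    have km1: "k*m \<ge> 1" using k3 mpos by (simp add: one_le_mult_iff)
    define q where "q = min (nat \<lfloor>(y-a)/h\<rfloor>) (k*m - 1)"
    have "k*m - 1 < k*m" using km1 by simp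
    then have qlt: "q < k*m" unfolding q_def by (meson min.strict_coboundedI2)
    have yq: "a + real q * h \<le> y \<and> y \<le> a + real (q+1) * h"
    proof (cases "nat \<lfloor>(y-a)/h\<rfloor> \<le> k*m - 1")
      case True
      then have q: "q = nat \<lfloor>(y-a)/h\<rfloor>" unfolding q_def by simp
      have "(y-a)/h \<ge> 0" using y hp by auto
      then have "real q \<le> (y-a)/h \<and> (y-a)/h \<le> real q + 1"
        unfolding q by linarith
      then show ?thesis using hp by (simp add: field_simps)
    next
      case False
      then have q: "q = k*m - 1" unfolding q_def by simp
      have "(y-a)/h \<ge> real (k*m)" using False by linarith
      then have "y - a \<ge> real (k*m) * h" using hp by (simp add: field_simps)
      moreover have "y - a \<le> real (k*m) * h" using y L_eq by (simp add: L_def)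
      ultimately have yb: "y = a + real (k*m) * h" by simp
      have "real q = real (k*m) - 1" using km1 q by (simp add: of_nat_diff)
      then show ?thesis using yb hp by (simp add: algebra_simps)
    qed
    have qF: "q \<notin> F" using free y yq by blast
    define s where "s = Max {s\<in>S. s \<le> q}"
    have sfin: "finite {s\<in>S. s \<le> q}" using finS by simp
    have sin: "s \<in> S \<and> s \<le> q" unfolding s_def using Min_in sfin
      by (metis (no_types, lifting) Max_in S_def empty_iff insertI1 mem_Collect_eq zero_le)
    have smax: "t \<le> s" if "t \<in> S" "t \<le> q" for t unfolding s_def by (rule Max_ge) (use sfin that in auto)
    have qe: "q < e s"
    proof (rule ccontr)
      assume "\<not> q < e s"
      then have eq: "e s \<le> q" by simp
      from e_in[of s] have "e s \<in> F \<and> s \<le> e s" using eq qlt by auto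
      then have "e s \<in> F" "s \<le> e s" by auto
      then have "e s < q" using eq qF by (metis le_neq_implies_less)
      then have "Suc (e s) \<in> S" "Suc (e s) \<le> q" using \<open>e s \<in> F\<close> unfolding S_def by auto
      then have "Suc (e s) \<le> s" by (rule smax)
      then show False using \<open>s \<le> e s\<close> by simp
    qed
    have "a + real s * h \<le> a + real q * h" using sin hp by (simp add: mult_right_mono)
    moreover have "a + real (q+1) * h \<le> a + real (e s) * h" using qe hp
      by (simp add: mult_right_mono del: of_nat_add)
    ultimately have "y \<in> {lo s..hi s}" using yq unfolding lo_def hi_def by auto
    then show "y \<in> (\<Union>s\<in>S. {lo s..hi s})" using sin by auto
  qed
  show ?thesis
    by (rule exI[of _ S], rule exI[of _ lo], rule exI[of _ hi])
       (use finS cardS lohi cov sumb in \<open>simp add: m_def\<close>)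
qed


lemma base_cover:
  fixes r a b :: real
  assumes "r > 0" "a \<le> b"
  shows "\<exists>P. finite P \<and> card P \<le> nat \<lfloor>(b-a)/r\<rfloor> + 1 \<and> {a..b} \<subseteq> (\<Union>c\<in>P. {c - r/2..c + r/2})"
proof -
  define P where "P = (\<lambda>i. a + (real i + 1/2) * r) ` {..nat \<lfloor>(b-a)/r\<rfloor>}"
  have c1: "card P \<le> nat \<lfloor>(b-a)/r\<rfloor> + 1"
    unfolding P_def using card_image_le[of "{..nat \<lfloor>(b-a)/r\<rfloor>}"] by simp
  moreover have c2: "{a..b} \<subseteq> (\<Union>c\<in>P. {c - r/2..c + r/2})"
  proof
    fix y assume y: "y \<in> {a..b}"
    define i where "i = nat \<lfloor>(y-a)/r\<rfloor>"
    have nn: "(y-a)/r \<ge> 0" using y assms by auto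
    have i1: "real i \<le> (y-a)/r" "(y-a)/r < real i + 1" unfolding i_def using nn by linarith+
    have "(y-a)/r \<le> (b-a)/r" using y assms by (simp add: divide_right_mono)
    then have "i \<le> nat \<lfloor>(b-a)/r\<rfloor>" unfolding i_def by (intro nat_mono floor_mono)
    moreover have "y \<in> {(a + (real i + 1/2) * r) - r/2..(a + (real i + 1/2) * r) + r/2}"
      using i1 assms by (simp add: field_simps)
    ultimately show "y \<in> (\<Union>c\<in>P. {c - r/2..c + r/2})" unfolding P_def by auto
  qed
  moreover have "finite P" unfolding P_def by simp
  ultimately show ?thesis by blast
qed

lemma count_cover:
  fixes k :: nat and eps \<alpha> :: real and E :: "real set"
  assumes k3: "k \<ge> 3" and e0: "0 < eps" and e1: "eps < 1/10" and av: "avoids_AP k eps E"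
    and A\<alpha>: "ln (real (nat \<lceil>1/eps\<rceil> + 1)) / (ln (real (nat \<lceil>1/eps\<rceil> + 1)) - ln (1 - 1/real k)) < \<alpha>"
    and \<alpha>1: "\<alpha> < 1"
  shows "\<exists>C>0. \<forall>r>0. \<forall>a b. a \<le> b \<longrightarrow> (\<exists>P. finite P \<and> real (card P) \<le> C * (max 1 ((b-a)/r)) powr \<alpha>
           \<and> E \<inter> {a..b} \<subseteq> (\<Union>c\<in>P. {c - r/2..c + r/2}))"
proof -
  define N where "N = nat \<lceil>1/eps\<rceil> + 1"
  define \<theta> where "\<theta> = 1 - 1/real k"
  have kp: "real k \<ge> 3" using k3 by simp
  have th0: "\<theta> > 0" "\<theta> < 1" unfolding \<theta>_def using kp by (simp_all add: field_simps)
  have N2: "N \<ge> 2"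
  proof -
    have "1/eps > 0" using e0 by simp
    then have "\<lceil>1/eps\<rceil> \<ge> 1" by (simp add: Suc_leI)
    then have "nat 1 \<le> nat \<lceil>1/eps\<rceil>" by (rule nat_mono)
    then show ?thesis unfolding N_def by simp
  qed
  have lnN: "ln (real N) > 0" using N2 by simp
  have lnth: "ln \<theta> < 0" using th0 by simp
  have Dp: "ln (real N) - ln \<theta> > 0" using lnN lnth by simp
  have A\<alpha>': "ln (real N) / (ln (real N) - ln \<theta>) < \<alpha>" using A\<alpha> unfolding N_def \<theta>_def by simp
  have Apos: "ln (real N) / (ln (real N) - ln \<theta>) > 0" using lnN Dp by simp
  have \<alpha>0: "\<alpha> > 0" using Apos A\<alpha>' by simp
  define \<theta>' where "\<theta>' = real N powr (1-\<alpha>) * \<theta> powr \<alpha>"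
  have th'0: "\<theta>' \<ge> 0" unfolding \<theta>'_def by simp
  have th'1: "\<theta>' < 1"
  proof -
    have "ln (real N) < \<alpha> * (ln (real N) - ln \<theta>)" using A\<alpha>' Dp by (simp add: field_simps)
    then have neg: "(1-\<alpha>) * ln (real N) + \<alpha> * ln \<theta> < 0" by (simp add: algebra_simps)
    have "\<theta>' = exp ((1-\<alpha>) * ln (real N) + \<alpha> * ln \<theta>)"
      unfolding \<theta>'_def using N2 th0 by (simp add: powr_def exp_add)
    then show ?thesis using neg by simp
  qed
  define M where "M = max 1 ((real N / (1-\<theta>')) powr (1/\<alpha>))"
  have M1: "M \<ge> 1" unfolding M_def by simp
  have Ma: "M powr \<alpha> \<ge> real N / (1-\<theta>')"
  proof -
    have "M powr \<alpha> \<ge> ((real N / (1-\<theta>')) powr (1/\<alpha>)) powr \<alpha>"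
      unfolding M_def using \<alpha>0 by (intro powr_mono2) auto
    also have "((real N / (1-\<theta>')) powr (1/\<alpha>)) powr \<alpha> = real N / (1-\<theta>')"
      using \<alpha>0 th'1 N2 by (simp add: powr_powr)
    finally show ?thesis .
  qed
  define C where "C = M + 1"
  have Cp: "C > 0" using M1 by (simp add: C_def)
  have main: "\<forall>r>0. \<forall>a b. a \<le> b \<longrightarrow> (\<exists>P. finite P \<and> real (card P) \<le> C * (max 1 ((b-a)/r)) powr \<alpha>
           \<and> E \<inter> {a..b} \<subseteq> (\<Union>c\<in>P. {c - r/2..c + r/2}))"
  proof (intro allI impI)
    fix r a b :: real assume r: "r > 0" and ab: "a \<le> b"
    have base: "\<exists>P. finite P \<and> real (card P) \<le> C * (max 1 ((b-a)/r)) powr \<alpha>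
           \<and> E \<inter> {a..b} \<subseteq> (\<Union>c\<in>P. {c - r/2..c + r/2})" if ab: "a \<le> b" and sm: "b - a \<le> M * r" for a b
    proof -
      obtain P where P: "finite P" "card P \<le> nat \<lfloor>(b-a)/r\<rfloor> + 1" "{a..b} \<subseteq> (\<Union>c\<in>P. {c - r/2..c + r/2})"
        using base_cover[OF r ab] by blast
      have "(b-a)/r \<le> M" using sm r by (simp add: field_simps)
      then have "real (nat \<lfloor>(b-a)/r\<rfloor>) \<le> M" using M1 by linarith
      then have "real (card P) \<le> C" using P(2) unfolding C_def
        by (smt (verit) of_nat_1 of_nat_add of_nat_le_iff)
      also have "C \<le> C * (max 1 ((b-a)/r)) powr \<alpha>"
        using Cp \<alpha>0 by (simp add: ge_one_powr_ge_zero)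
      finally show ?thesis using P by blast
    qed
    have ind: "\<forall>a b. a \<le> b \<and> b - a \<le> M * r * (1/\<theta>)^n \<longrightarrow> (\<exists>P. finite P \<and> real (card P) \<le> C * (max 1 ((b-a)/r)) powr \<alpha>
           \<and> E \<inter> {a..b} \<subseteq> (\<Union>c\<in>P. {c - r/2..c + r/2}))" for n
    proof (induction n)
      case 0
      then show ?case using base by simp
    next
      case (Suc n)
      show ?case
      proof (intro allI impI)
        fix a b assume hyp: "a \<le> b \<and> b - a \<le> M * r * (1/\<theta>)^Suc n"
        show "\<exists>P. finite P \<and> real (card P) \<le> C * (max 1 ((b-a)/r)) powr \<alpha> \<and> E \<inter> {a..b} \<subseteq> (\<Union>c\<in>P. {c - r/2..c + r/2})"
        proof (cases "b - a \<le> M * r")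
          case True then show ?thesis using base hyp by blast
        next
          case False
          define L where "L = b - a"
          have LMr: "L > M * r" using False by (simp add: L_def)
          have Lp: "L > 0" using LMr M1 r by (smt (verit) mult_pos_pos)
          obtain S lo hi where S: "finite (S::nat set)" "card S \<le> N" "\<forall>s\<in>S. lo s \<le> hi s"
            "E \<inter> {a..b} \<subseteq> (\<Union>s\<in>S. {lo s..hi s})" "(\<Sum>s\<in>S. hi s - lo s) \<le> \<theta> * L"
            using one_step[OF k3 e0 e1 av, of a b] hyp unfolding N_def \<theta>_def L_def by blast
          have piece: "hi s - lo s \<le> \<theta> * L" if "s \<in> S" for s
          proof -
            have "hi s - lo s \<le> (\<Sum>s\<in>S. hi s - lo s)"
              by (rule member_le_sum) (use S that in auto)
            then show ?thesis using S(5) by simp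
          qed
          have thL: "\<theta> * L \<le> M * r * (1/\<theta>)^n"
          proof -
            have "\<theta> * L \<le> \<theta> * (M * r * (1/\<theta>)^Suc n)" using hyp th0 unfolding L_def by (intro mult_left_mono) auto
            also have "\<dots> = M * r * (1/\<theta>)^n" using th0 by (simp add: field_simps)
            finally show ?thesis .
          qed
          have "\<forall>s\<in>S. \<exists>P. finite P \<and> real (card P) \<le> C * (max 1 ((hi s - lo s)/r)) powr \<alpha>
               \<and> E \<inter> {lo s..hi s} \<subseteq> (\<Union>c\<in>P. {c - r/2..c + r/2})"
            using Suc.IH S(3) piece thL by (meson order_trans)
          then obtain Pf where Pf: "\<And>s. s \<in> S \<Longrightarrow> finite (Pf s) \<and> real (card (Pf s)) \<le> C * (max 1 ((hi s - lo s)/r)) powr \<alpha>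
               \<and> E \<inter> {lo s..hi s} \<subseteq> (\<Union>c\<in>Pf s. {c - r/2..c + r/2})"
            by metis
          define P where "P = (\<Union>s\<in>S. Pf s)"
          have finP: "finite P" unfolding P_def using S(1) Pf by auto
          have covP: "E \<inter> {a..b} \<subseteq> (\<Union>c\<in>P. {c - r/2..c + r/2})"
          proof
            fix y assume y: "y \<in> E \<inter> {a..b}"
            then obtain s where s: "s \<in> S" "y \<in> {lo s..hi s}" using S(4) by blast
            then have "y \<in> (\<Union>c\<in>Pf s. {c - r/2..c + r/2})" using Pf y by blast
            then show "y \<in> (\<Union>c\<in>P. {c - r/2..c + r/2})" using s unfolding P_def by blast
          qed
          have "real (card P) \<le> real (\<Sum>s\<in>S. card (Pf s))"
            unfolding P_def using card_UN_le[OF S(1), of Pf] by (simp only: of_nat_le_iff)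
          also have "\<dots> = (\<Sum>s\<in>S. real (card (Pf s)))" by simp
          also have "\<dots> \<le> (\<Sum>s\<in>S. C * (1 + ((hi s - lo s)/r) powr \<alpha>))"
          proof (rule sum_mono)
            fix s assume s: "s \<in> S"
            have "(max 1 ((hi s - lo s)/r)) powr \<alpha> \<le> 1 + ((hi s - lo s)/r) powr \<alpha>"
            proof (cases "(hi s - lo s)/r \<le> 1")
              case True
              then have "max 1 ((hi s - lo s)/r) = 1" by simp
              then show ?thesis by simp
            next
              case False
              then show ?thesis by simp
            qed
            then have "C * (max 1 ((hi s - lo s)/r)) powr \<alpha> \<le> C * (1 + ((hi s - lo s)/r) powr \<alpha>)"
              using Cp by simp
            then show "real (card (Pf s)) \<le> C * (1 + ((hi s - lo s)/r) powr \<alpha>)" using Pf[OF s] by linarith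
          qed
          also have "\<dots> = C * (real (card S) + (\<Sum>s\<in>S. (hi s - lo s) powr \<alpha>) / r powr \<alpha>)"
            using S(3) r by (simp add: sum.distrib sum_distrib_left sum_divide_distrib powr_divide distrib_left)
          also have "\<dots> \<le> C * (real N + \<theta>' * L powr \<alpha> / r powr \<alpha>)"
          proof -
            have "(\<Sum>s\<in>S. (hi s - lo s) powr \<alpha>) \<le> real N powr (1-\<alpha>) * (\<theta> * L) powr \<alpha>"
              by (rule concave_sum_powr) (use S N2 th0 Lp \<alpha>0 \<alpha>1 in auto)
            also have "\<dots> = \<theta>' * L powr \<alpha>" unfolding \<theta>'_def using th0 Lp by (simp add: powr_mult)
            finally have "(\<Sum>s\<in>S. (hi s - lo s) powr \<alpha>) / r powr \<alpha> \<le> \<theta>' * L powr \<alpha> / r powr \<alpha>"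
              using r by (simp add: divide_right_mono)
            then show ?thesis using Cp S(2) by (intro mult_left_mono add_mono) auto
          qed
          also have "\<dots> \<le> C * (L/r) powr \<alpha>"
          proof -
            have Lr: "(L/r) powr \<alpha> \<ge> M powr \<alpha>" using LMr r M1 \<alpha>0 by (intro powr_mono2) (auto simp: field_simps)
            have "real N \<le> (1-\<theta>') * M powr \<alpha>" using Ma th'1 by (simp add: field_simps)
            also have "\<dots> \<le> (1-\<theta>') * (L/r) powr \<alpha>" using Lr th'1 by simp
            finally have "real N + \<theta>' * L powr \<alpha> / r powr \<alpha> \<le> (L/r) powr \<alpha>"
              using r Lp by (simp add: powr_divide algebra_simps diff_divide_distrib)
            then show ?thesis using Cp by simp
          qed
          also have "(L/r) = max 1 ((b-a)/r)"
          proof -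
            have "L/r \<ge> 1" using LMr M1 r by (simp add: field_simps) (smt (verit) mult_le_cancel_right1)
            then show ?thesis by (simp add: L_def)
          qed
          finally show ?thesis using finP covP by blast
        qed
      qed
    qed
    have "1 < 1/\<theta>" using th0 by simp
    then obtain n where "(b - a) / (M*r) < (1/\<theta>)^n" using real_arch_pow by blast
    then have "b - a \<le> M * r * (1/\<theta>)^n" using M1 r by (simp add: field_simps)
    then show "\<exists>P. finite P \<and> real (card P) \<le> C * (max 1 ((b-a)/r)) powr \<alpha>
           \<and> E \<inter> {a..b} \<subseteq> (\<Union>c\<in>P. {c - r/2..c + r/2})" using ind ab by blast
  qed
  show ?thesis using main Cp by blast
qed


lemma cover_number_le:
  assumes "finite P" "r > 0" "F \<subseteq> (\<Union>c\<in>P. {c - r/2..c + r/2})"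
  shows "covering_number r F \<le> card P"
proof -
  obtain f where f: "bij_betw f {0..<card P} P" using ex_bij_betw_nat_finite[OF assms(1)] by blast
  have "F \<subseteq> (\<Union>i<card P. ball (f i) ((\<lambda>_. r) i))"
  proof
    fix y assume "y \<in> F"
    then obtain c where c: "c \<in> P" "y \<in> {c - r/2..c + r/2}" using assms(3) by blast
    then obtain i where i: "i < card P" "f i = c" using f unfolding bij_betw_def by (metis imageE atLeastLessThan_iff)
    have "dist (f i) y < r" using c i assms(2) by (simp add: dist_real_def abs_less_iff)
    then show "y \<in> (\<Union>i<card P. ball (f i) ((\<lambda>_. r) i))" using i by auto
  qed
  then have "\<exists>c \<rho> :: nat \<Rightarrow> real. (\<forall>i<card P. 0 < \<rho> i \<and> \<rho> i \<le> r) \<and> F \<subseteq> (\<Union>i<card P. ball (c i) (\<rho> i))"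
    using assms(2) by (intro exI[of _ f] exI[of _ "\<lambda>_. r"]) auto
  then show ?thesis unfolding covering_number_def by (rule Least_le)
qed

lemma A_lt_1:
  fixes k :: nat and eps :: real
  assumes k3: "k \<ge> 3" and e0: "0 < eps"
  shows "ln (real (nat \<lceil>1/eps\<rceil> + 1)) / (ln (real (nat \<lceil>1/eps\<rceil> + 1)) - ln (1 - 1/real k)) < 1"
    and "0 < ln (real (nat \<lceil>1/eps\<rceil> + 1)) / (ln (real (nat \<lceil>1/eps\<rceil> + 1)) - ln (1 - 1/real k))"
proof -
  have kp: "real k \<ge> 3" using k3 by simp
  have th0: "1 - 1/real k > 0" "1 - 1/real k < 1" using kp by (simp_all add: field_simps)
  have "1/eps > 0" using e0 by simp
  then have "\<lceil>1/eps\<rceil> \<ge> 1" by (simp add: Suc_leI)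
  then have "nat 1 \<le> nat \<lceil>1/eps\<rceil>" by (rule nat_mono)
  then have lnN: "ln (real (nat \<lceil>1/eps\<rceil> + 1)) > 0" using e0 by simp
  have lt: "ln (1 - 1/real k) < 0" using th0 by simp
  show "ln (real (nat \<lceil>1/eps\<rceil> + 1)) / (ln (real (nat \<lceil>1/eps\<rceil> + 1)) - ln (1 - 1/real k)) < 1"
  proof -
    have "ln (real (nat \<lceil>1/eps\<rceil> + 1)) - ln (1 - 1/real k) > ln (real (nat \<lceil>1/eps\<rceil> + 1))" using lt by simp
    moreover have "\<And>X D::real. 0 < X \<Longrightarrow> X < D \<Longrightarrow> X/D < 1" by simp
    ultimately show ?thesis using lnN by blast
  qed
  show "0 < ln (real (nat \<lceil>1/eps\<rceil> + 1)) / (ln (real (nat \<lceil>1/eps\<rceil> + 1)) - ln (1 - 1/real k))"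
  proof -
    have "\<And>X D::real. 0 < X \<Longrightarrow> 0 < D \<Longrightarrow> 0 < X/D" by simp
    moreover have "ln (real (nat \<lceil>1/eps\<rceil> + 1)) - ln (1 - 1/real k) > 0" using lt lnN by linarith
    ultimately show ?thesis using lnN by blast
  qed
qed

lemma ereal_le_by_dense:
  fixes y :: ereal and A :: real
  assumes "A < 1" "\<And>\<alpha>. A < \<alpha> \<Longrightarrow> \<alpha> < 1 \<Longrightarrow> y \<le> ereal \<alpha>"
  shows "y \<le> ereal A"
proof (rule dense_ge_bounded[of "ereal A" "ereal 1"])
  show "ereal A < ereal 1" using assms by simp
  fix w assume w: "ereal A < w" "w < ereal 1"
  then obtain \<alpha> where "w = ereal \<alpha>" by (cases w) auto
  then show "y \<le> w" using w assms(2) by auto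
qed

lemma assouad_bound:
  fixes k :: nat and eps :: real and E :: "real set"
  assumes k3: "k \<ge> 3" and e0: "0 < eps" and e1: "eps < 1/10" and av: "avoids_AP k eps E"
  shows "assouad_dim E \<le> ereal (ln (real (nat \<lceil>1/eps\<rceil> + 1)) / (ln (real (nat \<lceil>1/eps\<rceil> + 1)) - ln (1 - 1/real k)))"
proof (rule ereal_le_by_dense)
  show "ln (real (nat \<lceil>1/eps\<rceil> + 1)) / (ln (real (nat \<lceil>1/eps\<rceil> + 1)) - ln (1 - 1/real k)) < 1"
    using A_lt_1[OF k3 e0] by simp
  fix \<alpha> assume A\<alpha>: "ln (real (nat \<lceil>1/eps\<rceil> + 1)) / (ln (real (nat \<lceil>1/eps\<rceil> + 1)) - ln (1 - 1/real k)) < \<alpha>"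
    and \<alpha>1: "\<alpha> < 1"
  have \<alpha>0: "\<alpha> \<ge> 0" using A_lt_1(2)[OF k3 e0] A\<alpha> by simp
  obtain C where Cp: "C > 0" and C: "\<forall>r>0. \<forall>a b. a \<le> b \<longrightarrow> (\<exists>P. finite P \<and> real (card P) \<le> C * (max 1 ((b-a)/r)) powr \<alpha>
           \<and> E \<inter> {a..b} \<subseteq> (\<Union>c\<in>P. {c - r/2..c + r/2}))"
    using count_cover[OF k3 e0 e1 av A\<alpha> \<alpha>1] by blast
  have "\<exists>C>0. \<forall>r R. 0 < r \<and> r < R \<longrightarrow>
        (\<forall>x\<in>E. real (covering_number r (ball x R \<inter> E)) \<le> C * (R / r) powr \<alpha>)"
  proof (intro exI[of _ "C * 2 powr \<alpha>"] conjI allI impI ballI)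
    show "C * 2 powr \<alpha> > 0" using Cp by simp
    fix r R x :: real assume rR: "0 < r \<and> r < R" and x: "x \<in> E"
    obtain P where P: "finite P" "real (card P) \<le> C * (max 1 (((x+R)-(x-R))/r)) powr \<alpha>"
      "E \<inter> {x-R..x+R} \<subseteq> (\<Union>c\<in>P. {c - r/2..c + r/2})"
    proof -
      have "x - R \<le> x + R" "r > 0" using rR by auto
      then show ?thesis using C that by blast
    qed
    have sub: "ball x R \<inter> E \<subseteq> E \<inter> {x-R..x+R}"
      by (auto simp: dist_real_def abs_less_iff)
    have "covering_number r (ball x R \<inter> E) \<le> card P"
      using cover_number_le[OF P(1)] rR sub P(3) by (meson order_trans)
    then have "real (covering_number r (ball x R \<inter> E)) \<le> real (card P)" by simp
    also have "\<dots> \<le> C * (max 1 (((x+R)-(x-R))/r)) powr \<alpha>" by (rule P(2))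
    also have "max 1 (((x+R)-(x-R))/r) = 2 * (R/r)" using rR by (simp add: field_simps)
    also have "C * (2 * (R/r)) powr \<alpha> = C * 2 powr \<alpha> * (R/r) powr \<alpha>"
      using rR powr_mult[of 2 "R/r" \<alpha>] by simp
    finally show "real (covering_number r (ball x R \<inter> E)) \<le> C * 2 powr \<alpha> * (R / r) powr \<alpha>" .
  qed
  then show "assouad_dim E \<le> ereal \<alpha>"
    unfolding assouad_dim_def using \<alpha>0 by (intro Inf_lower) blast
qed


lemma hausdorff_zero:
  fixes k :: nat and eps \<alpha>' :: real and E :: "real set"
  assumes k3: "k \<ge> 3" and e0: "0 < eps" and e1: "eps < 1/10" and av: "avoids_AP k eps E"
    and bE: "bounded E"
    and A\<alpha>: "ln (real (nat \<lceil>1/eps\<rceil> + 1)) / (ln (real (nat \<lceil>1/eps\<rceil> + 1)) - ln (1 - 1/real k)) < \<alpha>'"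
    and \<alpha>1: "\<alpha>' < 1"
  shows "hausdorff_measure \<alpha>' E = 0"
proof -
  define A where "A = ln (real (nat \<lceil>1/eps\<rceil> + 1)) / (ln (real (nat \<lceil>1/eps\<rceil> + 1)) - ln (1 - 1/real k))"
  define \<alpha> where "\<alpha> = (A + \<alpha>') / 2"
  have A0: "A > 0" unfolding A_def using A_lt_1(2)[OF k3 e0] .
  have Aa: "A < \<alpha>" "\<alpha> < \<alpha>'" "\<alpha> < 1" "\<alpha> > 0" using A\<alpha> \<alpha>1 A0 unfolding \<alpha>_def A_def[symmetric] by auto
  obtain C where Cp: "C > 0" and C: "\<forall>r>0. \<forall>a b. a \<le> b \<longrightarrow> (\<exists>P. finite P \<and> real (card P) \<le> C * (max 1 ((b-a)/r)) powr \<alpha>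
           \<and> E \<inter> {a..b} \<subseteq> (\<Union>c\<in>P. {c - r/2..c + r/2}))"
    using count_cover[OF k3 e0 e1 av _ Aa(3)] Aa(1) unfolding A_def by blast
  obtain B where B: "\<forall>y\<in>E. \<bar>y\<bar> \<le> B" using bE unfolding bounded_real by blast
  define a where "a = - max B 0 - 1"
  define b where "b = max B 0 + 1"
  define L where "L = b - a"
  have Lp: "L > 0" unfolding L_def a_def b_def by simp
  have ab: "a \<le> b" using Lp unfolding L_def by simp
  have Esub: "E \<subseteq> {a..b}" proof
    fix y assume "y \<in> E"
    then have "\<bar>y\<bar> \<le> B" using B by blast
    then show "y \<in> {a..b}" unfolding a_def b_def by (simp add: abs_le_iff)
  qed
  define \<beta> where "\<beta> = \<alpha>' - \<alpha>"
  have \<beta>p: "\<beta> > 0" using Aa unfolding \<beta>_def by simp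
  have content: "hausdorff_content \<alpha>' \<delta> E = 0" if \<delta>: "\<delta> > 0" for \<delta>
  proof -
    have eb: "hausdorff_content \<alpha>' \<delta> E \<le> 0 + ennreal \<eta>" if \<eta>: "\<eta> > 0" for \<eta>
    proof -
      define K where "K = C * L powr \<alpha>"
      have Kp: "K > 0" using Cp Lp by (simp add: K_def)
      define r0 where "r0 = (\<eta> / K) powr (1/\<beta>)"
      have r0p: "r0 > 0" using \<eta> Kp by (simp add: r0_def)
      define r where "r = min \<delta> (min L r0)"
      have rp: "r > 0" using \<delta> Lp r0p by (simp add: r_def)
      have rd: "r \<le> \<delta>" "r \<le> L" "r \<le> r0" unfolding r_def by auto
      obtain P where P: "finite P" "real (card P) \<le> C * (max 1 ((b-a)/r)) powr \<alpha>"
        "E \<inter> {a..b} \<subseteq> (\<Union>c\<in>P. {c - r/2..c + r/2})"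
        using C[rule_format, OF rp ab] by auto
      obtain f where f: "bij_betw f {0..<card P} P" using ex_bij_betw_nat_finite[OF P(1)] by blast
      define U where "U i = (if i < card P then {f i - r/2..f i + r/2} else {})" for i
      have Ucov: "E \<subseteq> (\<Union>i. U i)"
      proof
        fix y assume y: "y \<in> E"
        then obtain c where c: "c \<in> P" "y \<in> {c - r/2..c + r/2}" using P(3) Esub by blast
        then obtain i where i: "i < card P" "f i = c" using f unfolding bij_betw_def by (metis imageE atLeastLessThan_iff)
        then show "y \<in> (\<Union>i. U i)" using c unfolding U_def by auto
      qed
      have diamU: "diameter (U i) = (if i < card P then r else 0)" for i
        unfolding U_def using rp by auto
      have Uok: "\<forall>i. bounded (U i) \<and> diameter (U i) \<le> \<delta>"
        using diamU \<delta> rd unfolding U_def by auto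
      have "hausdorff_content \<alpha>' \<delta> E \<le> (\<Sum>i. ennreal (diameter (U i) powr \<alpha>'))"
        unfolding hausdorff_content_def by (rule INF_lower) (use Ucov Uok in blast)
      also have "(\<Sum>i. ennreal (diameter (U i) powr \<alpha>')) = (\<Sum>i<card P. ennreal (diameter (U i) powr \<alpha>'))"
        by (rule suminf_finite) (auto simp: diamU)
      also have "\<dots> = (\<Sum>i<card P. ennreal (r powr \<alpha>'))" by (simp add: diamU)
      also have "\<dots> = ennreal (real (card P) * r powr \<alpha>')"
        using sum_ennreal[of "{..<card P}" "\<lambda>_. r powr \<alpha>'"] by simp
      also have "real (card P) * r powr \<alpha>' \<le> \<eta>"
      proof -
        have "L/r \<ge> 1" using rp rd by simp
        then have Lr: "max 1 ((b-a)/r) = L/r" unfolding L_def[symmetric] by simp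
        have "real (card P) * r powr \<alpha>' \<le> C * (L/r) powr \<alpha> * r powr \<alpha>'"
          using P(2) Lr by (intro mult_right_mono) auto
        also have "\<dots> = K * r powr \<beta>"
          using rp Lp by (simp add: K_def \<beta>_def powr_divide powr_diff)
        also have "\<dots> \<le> K * r0 powr \<beta>"
          using Kp \<beta>p rp rd by (intro mult_left_mono powr_mono2) auto
        also have "r0 powr \<beta> = \<eta> / K" using \<beta>p \<eta> Kp by (simp add: r0_def powr_powr)
        also have "K * (\<eta> / K) = \<eta>" using Kp by simp
        finally show ?thesis .
      qed
      then have "ennreal (real (card P) * r powr \<alpha>') \<le> ennreal \<eta>" by (rule ennreal_leI)
      finally show ?thesis by simp
    qed
    have "hausdorff_content \<alpha>' \<delta> E \<le> 0"
    proof (rule ennreal_le_epsilon)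
      fix e :: real assume "0 < e" then show "hausdorff_content \<alpha>' \<delta> E \<le> 0 + ennreal e" by (rule eb)
    qed
    then show ?thesis by simp
  qed
  show ?thesis unfolding hausdorff_measure_def using content by simp
qed

lemma hausdorff_bound:
  fixes k :: nat and eps :: real and E :: "real set"
  assumes k3: "k \<ge> 3" and e0: "0 < eps" and e1: "eps < 1/10" and av: "avoids_AP k eps E"
    and bE: "bounded E"
  shows "hausdorff_dim E \<le> ereal (ln (real (nat \<lceil>1/eps\<rceil> + 1)) / (ln (real (nat \<lceil>1/eps\<rceil> + 1)) - ln (1 - 1/real k)))"
proof (rule ereal_le_by_dense)
  show "ln (real (nat \<lceil>1/eps\<rceil> + 1)) / (ln (real (nat \<lceil>1/eps\<rceil> + 1)) - ln (1 - 1/real k)) < 1"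
    using A_lt_1[OF k3 e0] by simp
  fix \<alpha> assume A\<alpha>: "ln (real (nat \<lceil>1/eps\<rceil> + 1)) / (ln (real (nat \<lceil>1/eps\<rceil> + 1)) - ln (1 - 1/real k)) < \<alpha>"
    and \<alpha>1: "\<alpha> < 1"
  have \<alpha>0: "\<alpha> \<ge> 0" using A_lt_1(2)[OF k3 e0] A\<alpha> by simp
  have "hausdorff_measure \<alpha> E = 0" by (rule hausdorff_zero[OF k3 e0 e1 av bE A\<alpha> \<alpha>1])
  then show "hausdorff_dim E \<le> ereal \<alpha>"
    unfolding hausdorff_dim_def using \<alpha>0 by (intro Inf_lower) blast
qed


lemma ineq2:
  fixes k :: nat and eps :: real
  assumes k3: "k \<ge> 3" and e0: "0 < eps" and e1: "eps < 1/10"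
  shows "ln (real_of_int \<lceil>1/eps\<rceil> + 1) / (ln (real_of_int \<lceil>1/eps\<rceil> + 1) - ln (1 - 1 / real k))
         \<le> 1 - (1/4) / (real k * \<bar>ln eps\<bar>)"
proof -
  define x where "x = 1/eps"
  define mm where "mm = real_of_int \<lceil>1/eps\<rceil>"
  have x10: "x > 10" using e0 e1 unfolding x_def by (simp add: field_simps)
  have mmx: "mm \<ge> x" "mm < x + 1" unfolding mm_def x_def by linarith+
  define lnN where "lnN = ln (mm + 1)"
  define Lg where "Lg = ln x"
  have Lg_eq: "\<bar>ln eps\<bar> = Lg"
  proof -
    have "ln eps < 0" using e0 e1 by simp
    moreover have "ln x = - ln eps" unfolding x_def using e0 by (simp add: ln_div)
    ultimately show ?thesis unfolding Lg_def by simp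
  qed
  have Lg1: "Lg > 1"
  proof -
    have "exp 1 < x" using e_less_272 x10 by simp
    then have "ln (exp 1) < ln x" using x10 by (subst ln_less_cancel_iff) auto
    then show ?thesis unfolding Lg_def by simp
  qed
  have lnN0: "lnN > 0" unfolding lnN_def using mmx x10 by simp
  have lnN2: "lnN \<le> 2 * Lg"
  proof -
    have "10 * x \<le> x * x" using x10 by (intro mult_right_mono) auto
    then have "mm + 1 \<le> x * x" using mmx x10 by linarith
    then have "ln (mm + 1) \<le> ln (x * x)" using mmx x10 by (subst ln_le_cancel_iff) auto
    also have "ln (x * x) = 2 * ln x" using x10 by (simp add: ln_mult)
    finally show ?thesis unfolding lnN_def Lg_def .
  qed
  define t where "t = - ln (1 - 1 / real k)"
  have kp: "real k \<ge> 3" using k3 by simp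
  have tk: "real k * t \<ge> 1"
  proof -
    have "ln (1 - 1/real k) \<le> (1 - 1/real k) - 1" by (rule ln_le_minus_one) (use kp in \<open>simp add: field_simps\<close>)
    then have "t \<ge> 1/real k" unfolding t_def by simp
    then show ?thesis using kp by (simp add: field_simps)
  qed
  have tpos: "t > 0"
  proof (rule ccontr)
    assume "\<not> t > 0"
    then have "real k * t \<le> 0" using kp by (simp add: mult_nonneg_nonpos)
    then show False using tk by simp
  qed
  have t1: "t \<le> 1"
  proof -
    have a: "- (1/real k) - 2 * (1/real k)^2 \<le> ln (1 - 1/real k)"
      by (rule ln_one_minus_pos_lower_bound) (use kp in \<open>simp_all add: field_simps\<close>)
    define u where "u = 1/real k"
    have u1: "u \<le> 1/3" "u \<ge> 0" using kp by (simp_all add: field_simps u_def)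
    have u2: "u^2 \<le> (1/3)^2" using u1 by (intro power_mono) simp_all
    have "- u - 2 * u^2 \<le> ln (1 - u)" using a unfolding u_def .
    then have "-1 \<le> ln (1 - u)" using u1 u2 by (simp add: power2_eq_square)
    then show ?thesis unfolding t_def u_def by simp
  qed
  define D where "D = lnN + t"
  have Dp: "D > 0" using lnN0 tpos by (simp add: D_def)
  have key: "D \<le> 4 * real k * Lg * t"
  proof -
    have h4: "4 * Lg \<le> 4 * Lg * (real k * t)" using tk Lg1 by simp
    have "4 * Lg * (real k * t) = 4 * real k * Lg * t" by simp
    then show ?thesis using h4 lnN2 t1 Lg1 unfolding D_def by linarith
  qed
  have "(1/4) / (real k * Lg) \<le> t / D"
    using key Dp Lg1 kp by (simp add: field_simps)
  moreover have "lnN / D = 1 - t / D" using Dp by (simp add: D_def field_simps)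
  ultimately have "lnN / D \<le> 1 - (1/4) / (real k * Lg)" by simp
  then show ?thesis unfolding D_def lnN_def t_def mm_def Lg_eq by simp
qed

theorem theorem1p1:
  shows "\<exists>c>0. \<forall>k::nat. \<forall>eps::real. k \<ge> 3 \<and> 0 < eps \<and> eps < 1/10 \<longrightarrow>
     (let m = real_of_int (ceiling (1/eps));
          A = ln (m + 1) / (ln (m + 1) - ln (1 - 1 / real k))
      in d_AP k eps \<le> ereal A
         \<and> A \<le> 1 - c / (real k * \<bar>ln eps\<bar>)
         \<and> (\<forall>E. bounded E \<and> avoids_AP k eps E \<longrightarrow> assouad_dim E \<le> ereal A))"
proof (intro exI[of _ "1/4"] conjI allI impI)
  show "(0::real) < 1/4" by simp
  fix k :: nat and eps :: real
  assume h: "k \<ge> 3 \<and> 0 < eps \<and> eps < 1/10"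
  then have k3: "k \<ge> 3" and e0: "0 < eps" and e1: "eps < 1/10" by auto
  have eqN: "real (nat \<lceil>1/eps\<rceil> + 1) = real_of_int \<lceil>1/eps\<rceil> + 1"
  proof -
    have "1/eps > 0" using e0 by simp
    then have "-1 < 1/eps" by linarith
    then have "\<lceil>1/eps\<rceil> \<ge> 0" by simp
    then show ?thesis by simp
  qed
  define A where "A = ln (real_of_int \<lceil>1/eps\<rceil> + 1) / (ln (real_of_int \<lceil>1/eps\<rceil> + 1) - ln (1 - 1 / real k))"
  have HB: "hausdorff_dim E \<le> ereal A" if "bounded E" "avoids_AP k eps E" for E
    using hausdorff_bound[OF k3 e0 e1 that(2) that(1)] unfolding eqN A_def .
  have AB: "assouad_dim E \<le> ereal A" if "avoids_AP k eps E" for E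
    using assouad_bound[OF k3 e0 e1 that] unfolding eqN A_def .
  have "d_AP k eps \<le> ereal A"
    unfolding d_AP_def by (rule SUP_least) (use HB in auto)
  moreover have "A \<le> 1 - (1/4) / (real k * \<bar>ln eps\<bar>)"
    unfolding A_def by (rule ineq2[OF k3 e0 e1])
  ultimately show "let m = real_of_int (ceiling (1/eps));
          A = ln (m + 1) / (ln (m + 1) - ln (1 - 1 / real k))
      in d_AP k eps \<le> ereal A
         \<and> A \<le> 1 - (1/4) / (real k * \<bar>ln eps\<bar>)
         \<and> (\<forall>E. bounded E \<and> avoids_AP k eps E \<longrightarrow> assouad_dim E \<le> ereal A)"
    using AB unfolding Let_def A_def by blast
qed

end
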